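(* For every finite simple graph $G$ on $n$ vertices with at least one edge, $$\min_{\lambda_n^{-1}\le x\le 0}W(x)\le n\Big(1-\frac{\delta}{\mu_1}\Big),$$ where $W(x)$ is the (unweighted) walk-generating function of $G$, $\delta$ the minimum degree, $\mu_1$ the largest eigenvalue of the Laplacian $L=D-A$, and $\lambda_n$ the smallest eigenvalue of the adjacency matrix $A$.
   Context: $A$ is the 0/1 adjacency matrix, $D$ the diagonal degree matrix, $\boldsymbol 1$ the all-ones vector. $W(x)=\langle\boldsymbol 1,(I-xA)^{-1}\boldsymbol 1\rangle=\sum_{\lambda\in\sigma(A)}\frac{\langle\boldsymbol 1,P_\lambda\boldsymbol 1\rangle}{1-\lambda x}$, where $P_\lambda$ is the orthogonal projection onto the $\lambda$-eigenspace of $A$, terms with $\langle\boldsymbol 1,P_\lambda\boldsymbol 1\rangle=0$ are omitted, and the value at a pole is $+\infty$. *)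

theory Defs
  imports "HOL-Analysis.Analysis"
begin

text \<open>Finite simple graphs on the vertex type 'n (n = CARD('n) vertices),
  given by a symmetric irreflexive edge relation.\<close>
definition simple_graph :: "('n::finite \<Rightarrow> 'n \<Rightarrow> bool) \<Rightarrow> bool" where
  "simple_graph E \<longleftrightarrow> (\<forall>i j. E i j \<longrightarrow> E j i) \<and> (\<forall>i. \<not> E i i)"

definition adj_matrix :: "('n::finite \<Rightarrow> 'n \<Rightarrow> bool) \<Rightarrow> real^'n^'n" where
  "adj_matrix E = (\<chi> i j. if E i j then 1 else 0)"

definition degree :: "('n::finite \<Rightarrow> 'n \<Rightarrow> bool) \<Rightarrow> 'n \<Rightarrow> nat" where
  "degree E i = card {j. E i j}"

definition degree_matrix :: "('n::finite \<Rightarrow> 'n \<Rightarrow> bool) \<Rightarrow> real^'n^'n" where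
  "degree_matrix E = (\<chi> i j. if i = j then real (degree E i) else 0)"

definition min_degree :: "('n::finite \<Rightarrow> 'n \<Rightarrow> bool) \<Rightarrow> nat" where
  "min_degree E = Min (range (degree E))"

definition laplacian :: "('n::finite \<Rightarrow> 'n \<Rightarrow> bool) \<Rightarrow> real^'n^'n" where
  "laplacian E = degree_matrix E - adj_matrix E"

definition spectrum :: "real^'n^'n \<Rightarrow> real set" where
  "spectrum M = {l. \<exists>v. v \<noteq> 0 \<and> M *v v = l *\<^sub>R v}"

definition eigenspace :: "real^'n^'n \<Rightarrow> real \<Rightarrow> (real^'n) set" where
  "eigenspace M l = {v. M *v v = l *\<^sub>R v}"

definition orth_proj :: "(real^'n) set \<Rightarrow> real^'n \<Rightarrow> real^'n" where
  "orth_proj S v = (THE p. p \<in> S \<and> (\<forall>w\<in>S. (v - p) \<bullet> w = 0))"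

definition ones :: "real^'n" where
  "ones = (\<chi> i. 1)"

definition spec_weight :: "real^'n^'n \<Rightarrow> real \<Rightarrow> real" where
  "spec_weight M l = ones \<bullet> orth_proj (eigenspace M l) ones"

definition walk_gen :: "('n::finite \<Rightarrow> 'n \<Rightarrow> bool) \<Rightarrow> real \<Rightarrow> ereal" where
  "walk_gen E x =
     (let A = adj_matrix E;
          S = {l \<in> spectrum A. spec_weight A l \<noteq> 0}
      in if (\<exists>l\<in>S. 1 - l * x = 0) then PInfty
         else ereal (\<Sum>l\<in>S. spec_weight A l / (1 - l * x)))"

end

theory Submission
  imports Defs
begin

definition symm :: "real^'n^'n \<Rightarrow> bool" where
  "symm M \<longleftrightarrow> (\<forall>i j. M$i$j = M$j$i)"

lemma sym_inner:
  assumes "symm M" shows "u \<bullet> (M *v v) = (M *v u) \<bullet> v"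
proof -
  have "u \<bullet> (M *v v) = (\<Sum>i\<in>UNIV. \<Sum>j\<in>UNIV. u$i * M$i$j * v$j)"
    by (simp add: inner_vec_def matrix_vector_mult_def sum_distrib_left mult.assoc)
  also have "\<dots> = (\<Sum>j\<in>UNIV. \<Sum>i\<in>UNIV. u$i * M$i$j * v$j)" by (rule sum.swap)
  also have "\<dots> = (\<Sum>j\<in>UNIV. \<Sum>i\<in>UNIV. M$j$i * u$i * v$j)"
  proof (intro sum.cong refl)
    fix i j show "u$i * M$i$j * v$j = M$j$i * u$i * v$j"
      using assms unfolding symm_def by (metis mult.commute)
  qed
  also have "\<dots> = (M *v u) \<bullet> v"
    by (simp add: inner_vec_def matrix_vector_mult_def sum_distrib_right)
  finally show ?thesis .
qed

lemma eig_orth: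
  assumes "symm M" "M *v u = a *\<^sub>R u" "M *v v = b *\<^sub>R v" "a \<noteq> b"
  shows "u \<bullet> v = 0"
proof -
  have "b * (u \<bullet> v) = a * (u \<bullet> v)"
    using sym_inner[OF assms(1), of u v] assms(2,3) by simp
  thus ?thesis using assms(4) by simp
qed

lemma spectrum_finite:
  assumes "symm M" shows "finite (spectrum M)"
proof -
  have "\<forall>l\<in>spectrum M. \<exists>v. v \<noteq> 0 \<and> M *v v = l *\<^sub>R v" unfolding spectrum_def by blast
  then obtain f where f: "\<And>l. l \<in> spectrum M \<Longrightarrow> f l \<noteq> 0 \<and> M *v f l = l *\<^sub>R f l"
    by metis
  have inj: "inj_on f (spectrum M)"
  proof (rule inj_onI)
    fix a b assume ab: "a \<in> spectrum M" "b \<in> spectrum M" "f a = f b"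
    show "a = b"
    proof (rule ccontr)
      assume "a \<noteq> b"
      hence "f a \<bullet> f b = 0" using eig_orth[OF assms] f ab by blast
      thus False using ab f by simp
    qed
  qed
  have "pairwise orthogonal (f ` spectrum M)"
    unfolding pairwise_def orthogonal_def
    using eig_orth[OF assms] f by (metis imageE)
  moreover have "0 \<notin> f ` spectrum M" using f by auto
  ultimately have "finite (f ` spectrum M)"
    using pairwise_orthogonal_independent finiteI_independent by blast
  thus ?thesis using finite_imageD inj by blast
qed

lemma psd_zero:
  assumes "symm N" "\<And>v. v \<bullet> (N *v v) \<ge> 0" "u \<bullet> (N *v u) = 0"
  shows "N *v u = 0"
proof -
  let ?w = "N *v u"
  have key: "2 * s * (?w \<bullet> ?w) + s^2 * (?w \<bullet> (N *v ?w)) \<ge> 0" for s :: real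
  proof -
    have "0 \<le> (u + s *\<^sub>R ?w) \<bullet> (N *v (u + s *\<^sub>R ?w))" by (rule assms(2))
    also have "\<dots> = u \<bullet> (N *v u) + s * (u \<bullet> (N *v ?w)) + s * (?w \<bullet> ?w) + s^2 * (?w \<bullet> (N *v ?w))"
      by (simp add: matrix_vector_right_distrib matrix_vector_mult_scaleR inner_add_left inner_add_right power2_eq_square algebra_simps)
    also have "u \<bullet> (N *v ?w) = ?w \<bullet> ?w" using sym_inner[OF assms(1)] by simp
    finally show ?thesis using assms(3) by simp
  qed
  define c where "c = ?w \<bullet> (N *v ?w)"
  define a where "a = ?w \<bullet> ?w"
  have a0: "a \<ge> 0" unfolding a_def by simp
  have "a = 0"
  proof (rule ccontr)
    assume "a \<noteq> 0" hence ap: "a > 0" using a0 by simp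
    have "c \<ge> 0" using assms(2) unfolding c_def by simp
    define s where "s = - a / (c + 1)"
    have cp: "c + 1 > 0" using \<open>c \<ge> 0\<close> by simp
    have e1: "(2 * s * a + s^2 * c) * (c+1)^2 = 2*a*(s*(c+1))*(c+1) + (s*(c+1))^2*c"
      by (simp add: power2_eq_square algebra_simps)
    have "s*(c+1) = -a" unfolding s_def using cp by simp
    hence "(2 * s * a + s^2 * c) * (c+1)^2 = 2*a*(-a)*(c+1) + (-a)^2*c" using e1 by simp
    also have "2*a*(-a)*(c+1) + (-a)^2*c = a^2 * (- c - 2)"
      by (simp add: power2_eq_square algebra_simps)
    finally have "(2 * s * a + s^2 * c) * (c+1)^2 = a^2 * (- c - 2)" .
    moreover have "2 * s * a + s^2 * c \<ge> 0" using key[of s] unfolding a_def c_def by simp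
    hence "(2 * s * a + s^2 * c) * (c+1)^2 \<ge> 0" by simp
    moreover have "a^2 * (- c - 2) < 0" using ap \<open>c \<ge> 0\<close>
      by (simp add: mult_pos_neg)
    ultimately show False by linarith
  qed
  thus ?thesis unfolding a_def by simp
qed


lemma mat_mult_scal: "mat l *v v = l *\<^sub>R (v::real^'n)"
proof -
  have "(mat l *v v)$i = l * v$i" for i
  proof -
    have "(mat l *v v)$i = (\<Sum>j\<in>UNIV. (if i = j then l else 0) * v$j)"
      by (simp add: matrix_vector_mult_def mat_def)
    also have "\<dots> = (\<Sum>j\<in>UNIV. if i = j then l * v$j else 0)"
      by (intro sum.cong refl) simp
    also have "\<dots> = l * v$i" by simp
    finally show ?thesis .
  qed
  thus ?thesis by (simp add: vec_eq_iff)
qed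

lemma rayleigh:
  fixes M :: "real^'n^'n"
  assumes "symm M" shows "\<exists>l\<in>spectrum M. \<forall>v. v \<bullet> (M *v v) \<le> l * (v \<bullet> v)"
proof -
  let ?f = "\<lambda>v::real^'n. v \<bullet> (M *v v)"
  have cont: "continuous_on (sphere 0 1) ?f"
    by (intro continuous_on_inner continuous_on_id linear_continuous_on_compose[where g="(*v) M"]
        matrix_vector_mul_linear)
  have "sphere (0::real^'n) 1 \<noteq> {}" by (simp add: sphere_eq_empty)
  then obtain u where u: "u \<in> sphere 0 1" "\<And>y. y \<in> sphere 0 1 \<Longrightarrow> ?f y \<le> ?f u"
    using continuous_attains_sup[OF compact_sphere _ cont] by blast
  define l where "l = ?f u"
  have bound: "v \<bullet> (M *v v) \<le> l * (v \<bullet> v)" for v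
  proof (cases "v = 0")
    case True thus ?thesis by simp
  next
    case False
    define w where "w = (1 / norm v) *\<^sub>R v"
    have "w \<in> sphere 0 1" using False unfolding w_def by simp
    hence "?f w \<le> l" using u unfolding l_def by blast
    moreover have "?f w = ?f v / (norm v)^2"
      unfolding w_def by (simp add: matrix_vector_mult_scaleR power2_eq_square)
    moreover have "(norm v)^2 = v \<bullet> v" by (simp add: power2_norm_eq_inner)
    moreover have "norm v > 0" using False by simp
    ultimately show ?thesis by (simp add: divide_le_eq mult.commute)
  qed
  define N where "N = mat l - M"
  have Nv: "N *v v = l *\<^sub>R v - M *v v" for v
    unfolding N_def by (simp add: matrix_vector_mult_diff_rdistrib mat_mult_scal)
  have symN: "symm N" using assms unfolding symm_def N_def by (simp add: mat_def)
  have psd: "v \<bullet> (N *v v) \<ge> 0" for v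
    using bound[of v] by (simp add: Nv inner_diff_right)
  have uu: "u \<bullet> u = 1" using u(1) by (simp add: dot_square_norm)
  have "u \<bullet> (N *v u) = 0" using uu by (simp add: Nv inner_diff_right l_def)
  hence "N *v u = 0" using psd_zero[OF symN psd] by blast
  hence "M *v u = l *\<^sub>R u" by (simp add: Nv)
  moreover have "u \<noteq> 0" using u(1) by auto
  ultimately have "l \<in> spectrum M" unfolding spectrum_def by blast
  thus ?thesis using bound by blast
qed


lemma eigenspace_subspace: "subspace (eigenspace M l)"
  unfolding subspace_def eigenspace_def
  by (simp add: matrix_vector_right_distrib matrix_vector_mult_scaleR scaleR_add_right)

lemma orth_proj_props:
  fixes S :: "(real^'n) set"
  assumes "subspace S"
  shows "orth_proj S v \<in> S \<and> (\<forall>w\<in>S. (v - orth_proj S v) \<bullet> w = 0)"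
proof -
  obtain y z where yz: "y \<in> span S" "\<And>w. w \<in> span S \<Longrightarrow> orthogonal z w" "v = y + z"
    using orthogonal_subspace_decomp_exists by metis
  have sp: "span S = S" using assms by (simp add: span_eq_iff)
  have ex: "y \<in> S \<and> (\<forall>w\<in>S. (v - y) \<bullet> w = 0)"
    using yz sp by (auto simp: orthogonal_def)
  have uniq: "p = y" if "p \<in> S \<and> (\<forall>w\<in>S. (v - p) \<bullet> w = 0)" for p
  proof -
    have d: "p - y \<in> S" using that ex assms by (simp add: subspace_diff)
    have "(v - p) \<bullet> (p - y) = 0" "(v - y) \<bullet> (p - y) = 0" using that ex d by auto
    hence "(p - y) \<bullet> (p - y) = 0" by (simp add: inner_diff_left)
    thus ?thesis by simp
  qed
  have "orth_proj S v = y" unfolding orth_proj_def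
    by (rule the_equality) (use ex uniq in blast)+
  thus ?thesis using ex by simp
qed

lemma orth_sum:
  fixes p :: "'a \<Rightarrow> real^'n"
  assumes "finite S" "\<And>l k. l \<in> S \<Longrightarrow> k \<in> S \<Longrightarrow> l \<noteq> k \<Longrightarrow> p l \<bullet> p k = 0"
  shows "(\<Sum>l\<in>S. a l *\<^sub>R p l) \<bullet> (\<Sum>k\<in>S. b k *\<^sub>R p k) = (\<Sum>l\<in>S. a l * b l * (p l \<bullet> p l))"
proof -
  have "(\<Sum>l\<in>S. a l *\<^sub>R p l) \<bullet> (\<Sum>k\<in>S. b k *\<^sub>R p k) = (\<Sum>k\<in>S. \<Sum>l\<in>S. a l * b k * (p l \<bullet> p k))"
    by (simp add: inner_sum_left inner_sum_right sum_distrib_left ac_simps)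
  also have "\<dots> = (\<Sum>l\<in>S. \<Sum>k\<in>S. a l * b k * (p l \<bullet> p k))" by (rule sum.swap)
  also have "\<dots> = (\<Sum>l\<in>S. a l * b l * (p l \<bullet> p l))"
  proof (rule sum.cong[OF refl])
    fix l assume l: "l \<in> S"
    have "(\<Sum>k\<in>S. a l * b k * (p l \<bullet> p k)) = a l * b l * (p l \<bullet> p l) + (\<Sum>k\<in>S - {l}. a l * b k * (p l \<bullet> p k))"
      using assms(1) l by (simp add: sum.remove)
    also have "(\<Sum>k\<in>S - {l}. a l * b k * (p l \<bullet> p k)) = 0"
      using assms(2) l by (intro sum.neutral) auto
    finally show "(\<Sum>k\<in>S. a l * b k * (p l \<bullet> p k)) = a l * b l * (p l \<bullet> p l)" by simp
  qed
  finally show ?thesis .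
qed

lemma axis_quad: "(axis u (1::real)) \<bullet> (M *v axis w 1) = M$u$w"
proof -
  have "(M *v axis w 1) $ u = M$u$w"
    by (simp add: matrix_vector_mult_def axis_def mult.commute if_distrib cong: if_cong)
  thus ?thesis by (simp add: inner_axis')
qed

lemma neg_mult: "(- M) *v v = - (M *v (v::real^'n))"
  by (simp add: vec_eq_iff matrix_vector_mult_def sum_negf)


lemma adj_symm: "simple_graph E \<Longrightarrow> symm (adj_matrix E)"
  unfolding simple_graph_def symm_def adj_matrix_def by (auto)

lemma lap_symm: "simple_graph E \<Longrightarrow> symm (laplacian E)"
  using adj_symm[of E] unfolding symm_def laplacian_def degree_matrix_def by auto

lemma deg_mult: "(degree_matrix E *v v)$i = real (degree E i) * v$i"
proof -
  have "(degree_matrix E *v v)$i = (\<Sum>j\<in>UNIV. (if i = j then real (degree E i) else 0) * v$j)"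
    by (simp add: matrix_vector_mult_def degree_matrix_def)
  also have "\<dots> = (\<Sum>j\<in>UNIV. if i = j then real (degree E i) * v$j else 0)"
    by (intro sum.cong refl) simp
  also have "\<dots> = real (degree E i) * v$i" by simp
  finally show ?thesis .
qed

lemma adj_ones: "adj_matrix E *v ones = (\<chi> i. real (degree E i))"
proof -
  have "(adj_matrix E *v ones)$i = real (degree E i)" for i
  proof -
    have "(adj_matrix E *v ones)$i = (\<Sum>j\<in>UNIV. (if E i j then 1 else 0) * 1)"
      by (simp add: matrix_vector_mult_def adj_matrix_def ones_def)
    also have "\<dots> = (\<Sum>j\<in>UNIV. if E i j then 1 else 0)" by simp
    also have "\<dots> = real (card {j. E i j})" by (simp add: sum.If_cases)
    finally show ?thesis by (simp add: degree_def)
  qed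
  thus ?thesis by (simp add: vec_eq_iff)
qed

lemma deg_ones: "degree_matrix E *v ones = (\<chi> i. real (degree E i))"
  by (simp add: vec_eq_iff deg_mult ones_def)

lemma lap_ones: "laplacian E *v ones = 0"
  by (simp add: laplacian_def matrix_vector_mult_diff_rdistrib adj_ones deg_ones)

lemma min_deg_le: "min_degree E \<le> degree E i"
  unfolding min_degree_def by (rule Min_le) auto

lemma deg_quad: "v \<bullet> (degree_matrix E *v v) \<ge> real (min_degree E) * (v \<bullet> v)"
proof -
  have "real (min_degree E) * (v \<bullet> v) = (\<Sum>i\<in>UNIV. real (min_degree E) * (v$i * v$i))"
    by (simp add: inner_vec_def sum_distrib_left)
  also have "\<dots> \<le> (\<Sum>i\<in>UNIV. v$i * (real (degree E i) * v$i))"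
  proof (rule sum_mono)
    fix i
    have "real (min_degree E) \<le> real (degree E i)" using min_deg_le by simp
    hence "real (min_degree E) * (v$i * v$i) \<le> real (degree E i) * (v$i * v$i)"
      by (rule mult_right_mono) simp
    thus "real (min_degree E) * (v$i * v$i) \<le> v$i * (real (degree E i) * v$i)" by (simp add: ac_simps)
  qed
  also have "\<dots> = v \<bullet> (degree_matrix E *v v)" by (simp add: inner_vec_def deg_mult)
  finally show ?thesis .
qed

lemma ones_ones: "(ones::real^'n) \<bullet> ones = real CARD('n)"
  by (simp add: inner_vec_def ones_def)


theorem proposition1:
  fixes E :: "'n::finite \<Rightarrow> 'n \<Rightarrow> bool"
  assumes "simple_graph E"
    and "\<exists>i j. E i j"
  shows "\<exists>x \<in> {1 / Min (spectrum (adj_matrix E)) .. 0}.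
           walk_gen E x \<le> ereal (real CARD('n) *
              (1 - real (min_degree E) / Max (spectrum (laplacian E))))"
proof -
  define A where "A = adj_matrix E"
  define L where "L = laplacian E"
  define Dm where "Dm = degree_matrix E"
  define n where "n = real CARD('n)"
  define \<delta> where "\<delta> = real (min_degree E)"
  define \<mu> where "\<mu> = Max (spectrum L)"
  define ln where "ln = Min (spectrum A)"
  obtain u w where uw: "E u w" using assms(2) by blast
  have uw_ne: "u \<noteq> w" using uw assms(1) unfolding simple_graph_def by auto
  have symA: "symm A" unfolding A_def using adj_symm[OF assms(1)] .
  have symL: "symm L" unfolding L_def using lap_symm[OF assms(1)] .
  have finA: "finite (spectrum A)" using spectrum_finite[OF symA] .
  have finL: "finite (spectrum L)" using spectrum_finite[OF symL] .
  have npos: "n > 0" unfolding n_def by simp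
  have d0: "\<delta> \<ge> 0" unfolding \<delta>_def by simp
  have LDA: "L *v v = Dm *v v - A *v v" for v
    unfolding L_def Dm_def A_def laplacian_def by (simp add: matrix_vector_mult_diff_rdistrib)
  define v0 :: "real^'n" where "v0 = axis u 1 - axis w 1"
  have quad0: "v0 \<bullet> (M *v v0) = M$u$u - M$u$w - M$w$u + M$w$w" for M :: "real^'n^'n"
    unfolding v0_def by (simp add: matrix_vector_mult_diff_distrib inner_diff_left inner_diff_right axis_quad)
  have v0v0: "v0 \<bullet> v0 = 2" unfolding v0_def using uw_ne
    by (simp add: inner_diff_left inner_diff_right inner_axis_axis)
  have Av0: "v0 \<bullet> (A *v v0) = -2"
    using uw assms(1) uw_ne unfolding quad0 A_def adj_matrix_def simple_graph_def by auto
  have Dv0: "v0 \<bullet> (Dm *v v0) = real (degree E u) + real (degree E w)"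
    using uw_ne unfolding quad0 Dm_def degree_matrix_def by auto
  obtain l0 where l0: "l0 \<in> spectrum L" "\<And>v. v \<bullet> (L *v v) \<le> l0 * (v \<bullet> v)"
    using rayleigh[OF symL] by blast
  have l0mu: "l0 \<le> \<mu>" unfolding \<mu>_def using finL l0(1) by simp
  have hL: "v \<bullet> (L *v v) \<le> \<mu> * (v \<bullet> v)" for v
  proof -
    have "l0 * (v \<bullet> v) \<le> \<mu> * (v \<bullet> v)" using l0mu by (simp add: mult_right_mono)
    thus ?thesis using l0(2)[of v] by linarith
  qed
  have "v0 \<bullet> (L *v v0) = real (degree E u) + real (degree E w) + 2"
    using Dv0 Av0 by (simp add: LDA inner_diff_right)
  moreover have "real (degree E u) \<ge> \<delta>" "real (degree E w) \<ge> \<delta>"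
    unfolding \<delta>_def using min_deg_le by auto
  moreover have "v0 \<bullet> (L *v v0) \<le> \<mu> * 2" using hL[of v0] v0v0 by simp
  ultimately have "2 * \<delta> + 2 \<le> \<mu> * 2" by linarith
  hence mud: "\<mu> \<ge> \<delta> + 1" by linarith
  have mupos: "\<mu> > 0" using mud d0 by linarith
  have symnA: "symm (- A)" using symA unfolding symm_def by simp
  obtain l1 where l1: "l1 \<in> spectrum (- A)" "\<And>v. v \<bullet> ((- A) *v v) \<le> l1 * (v \<bullet> v)"
    using rayleigh[OF symnA] by blast
  have l1A: "- l1 \<in> spectrum A" using l1(1) unfolding spectrum_def
    by (auto simp: neg_mult) (metis minus_minus)
  have "2 \<le> l1 * 2" using l1(2)[of v0] Av0 v0v0 by (simp add: neg_mult)
  hence "- l1 \<le> -1" by linarith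
  moreover have "ln \<le> - l1" unfolding ln_def using finA l1A by simp
  ultimately have lnneg: "ln < 0" by linarith
  have lnin: "ln \<in> spectrum A" unfolding ln_def using finA l1A Min_in by blast
  define t where "t = 1 / (\<mu> - \<delta>)"
  define c where "c = n * (1 - \<delta> / \<mu>)"
  have tpos: "t > 0" unfolding t_def using mud by simp
  have cpos: "c > 0" unfolding c_def using mud npos mupos by (simp add: field_simps)
  define Q where "Q v = v \<bullet> v + t * (v \<bullet> (A *v v))" for v
  have key: "(ones \<bullet> v)^2 \<le> c * Q v" for v
  proof -
    define s where "s = ones \<bullet> v"
    define z where "z = v - (s / n) *\<^sub>R ones"
    have Lz: "L *v z = L *v v" unfolding z_def
      by (simp add: matrix_vector_mult_diff_distrib matrix_vector_mult_scaleR L_def lap_ones)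
    have "z \<bullet> (L *v z) = v \<bullet> (L *v v) - (s/n) * (ones \<bullet> (L *v v))"
      unfolding Lz by (simp add: z_def inner_diff_left)
    also have "ones \<bullet> (L *v v) = 0" using sym_inner[OF symL, of ones v]
      by (simp add: L_def lap_ones)
    finally have zLz: "z \<bullet> (L *v z) = v \<bullet> (L *v v)" by simp
    have "z \<bullet> z = v \<bullet> v - 2 * (s/n) * s + (s/n)^2 * n"
      unfolding z_def using ones_ones[where 'n='n]
      by (simp add: inner_diff_left inner_diff_right s_def n_def inner_commute power2_eq_square algebra_simps)
    also have "\<dots> = v \<bullet> v - s^2 / n" using npos by (simp add: field_simps power2_eq_square)
    finally have zz: "z \<bullet> z = v \<bullet> v - s^2 / n" .
    have vL: "v \<bullet> (L *v v) \<le> \<mu> * (v \<bullet> v - s^2 / n)" using hL[of z] zLz zz by simp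
    have vD: "v \<bullet> (Dm *v v) \<ge> \<delta> * (v \<bullet> v)" unfolding Dm_def \<delta>_def by (rule deg_quad)
    have QA: "Q v = v \<bullet> v + t * (v \<bullet> (Dm *v v)) - t * (v \<bullet> (L *v v))"
      unfolding Q_def by (simp add: LDA inner_diff_right algebra_simps)
    have "Q v \<ge> v \<bullet> v + t * (\<delta> * (v \<bullet> v)) - t * (\<mu> * (v \<bullet> v - s^2 / n))"
      unfolding QA using vL vD tpos
      by (smt (verit) mult_left_mono)
    also have "v \<bullet> v + t * (\<delta> * (v \<bullet> v)) - t * (\<mu> * (v \<bullet> v - s^2 / n)) = t * \<mu> * s^2 / n"
    proof -
      have td: "t * (\<mu> - \<delta>) = 1" unfolding t_def using mud by simp
      have "v \<bullet> v + t * (\<delta> * (v \<bullet> v)) - t * (\<mu> * (v \<bullet> v - s^2 / n))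
          = (v \<bullet> v) * (1 - t * (\<mu> - \<delta>)) + t * \<mu> * s^2 / n"
        by (simp add: algebra_simps)
      thus ?thesis using td by simp
    qed
    finally have "t * \<mu> * s^2 / n \<le> Q v" .
    hence "c * (t * \<mu> * s^2 / n) \<le> c * Q v" using cpos by (rule mult_left_mono[OF _ less_imp_le])
    moreover have "c * (t * \<mu> * s^2 / n) = s^2"
      unfolding c_def t_def using mud npos mupos by (simp add: field_simps)
    ultimately show ?thesis unfolding s_def by simp
  qed
  have Qeig: "Q y = (1 + t * l) * (y \<bullet> y)" if "A *v y = l *\<^sub>R y" for y l
    unfolding Q_def using that by (simp add: algebra_simps)
  obtain y where y: "y \<noteq> 0" "A *v y = ln *\<^sub>R y" using lnin unfolding spectrum_def by blast
  have "0 \<le> c * Q y" using key[of y] by (smt (verit) zero_le_power2)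
  hence "Q y \<ge> 0" using cpos by (simp add: zero_le_mult_iff)
  hence "(1 + t * ln) * (y \<bullet> y) \<ge> 0" using Qeig[OF y(2)] by simp
  moreover have "y \<bullet> y > 0" using y(1) by simp
  ultimately have "1 + t * ln \<ge> 0" by (simp add: zero_le_mult_iff)
  hence xin: "- t \<in> {1 / ln .. 0}" using lnneg tpos by (simp add: divide_le_eq)
  define S where "S = {l \<in> spectrum A. spec_weight A l \<noteq> 0}"
  define p where "p l = orth_proj (eigenspace A l) ones" for l
  have finS: "finite S" unfolding S_def using finA by simp
  have pe: "A *v p l = l *\<^sub>R p l" for l
    using orth_proj_props[OF eigenspace_subspace, of A l ones] unfolding p_def eigenspace_def by simp
  have wp: "spec_weight A l = p l \<bullet> p l" for l
  proof -
    have "(ones - p l) \<bullet> p l = 0"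
      using orth_proj_props[OF eigenspace_subspace, of A l ones] unfolding p_def by blast
    thus ?thesis unfolding spec_weight_def p_def[symmetric] by (simp add: inner_diff_left)
  qed
  have porth: "p l \<bullet> p k = 0" if "l \<noteq> k" for l k
    using eig_orth[OF symA pe pe that] .
  have pos: "1 + t * l > 0" if "l \<in> S" for l
  proof -
    have "p l \<bullet> p l \<noteq> 0" using that wp unfolding S_def by simp
    hence w0: "p l \<bullet> p l > 0" by (simp add: order_less_le)
    have "(ones \<bullet> p l)^2 = (p l \<bullet> p l)^2" using wp[of l] unfolding spec_weight_def p_def by simp
    hence "(p l \<bullet> p l)^2 \<le> c * ((1 + t * l) * (p l \<bullet> p l))" using key[of "p l"] Qeig[OF pe] by simp
    moreover have "(p l \<bullet> p l)^2 > 0" using w0 by simp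
    ultimately have "c * ((1 + t * l) * (p l \<bullet> p l)) > 0" by linarith
    hence "(1 + t * l) * (p l \<bullet> p l) > 0" using cpos by (simp add: zero_less_mult_iff)
    thus ?thesis using w0 by (simp add: zero_less_mult_iff)
  qed
  define W where "W = (\<Sum>l\<in>S. spec_weight A l / (1 - l * (- t)))"
  have nopole: "\<not> (\<exists>l\<in>S. 1 - l * (- t) = 0)" 
  proof
    assume "\<exists>l\<in>S. 1 - l * (- t) = 0"
    then obtain l where "l \<in> S" "1 - l * (- t) = 0" by blast
    moreover have "1 - l * (- t) = 1 + t * l" by simp
    ultimately show False using pos by fastforce
  qed
  have wg: "walk_gen E (- t) = ereal W"
    unfolding walk_gen_def W_def S_def[symmetric] A_def[symmetric] Let_def using nopole by simp
  define a where "a l = 1 / (1 + t * l)" for l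
  define v where "v = (\<Sum>l\<in>S. a l *\<^sub>R p l)"
  have Wa: "W = (\<Sum>l\<in>S. a l * (p l \<bullet> p l))"
    unfolding W_def a_def by (simp add: wp algebra_simps)
  have ov: "ones \<bullet> v = W"
  proof -
    have "ones \<bullet> v = (\<Sum>l\<in>S. a l * (ones \<bullet> p l))" unfolding v_def by (simp add: inner_sum_right)
    also have "\<dots> = W" unfolding Wa using wp unfolding spec_weight_def p_def by simp
    finally show ?thesis .
  qed
  have Av: "A *v v = (\<Sum>l\<in>S. (a l * l) *\<^sub>R p l)"
    unfolding v_def by (simp add: vec.sum matrix_vector_mult_scaleR pe)
  have vv: "v \<bullet> v = (\<Sum>l\<in>S. a l * a l * (p l \<bullet> p l))"
    unfolding v_def by (rule orth_sum[OF finS]) (use porth in blast)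
  have vAv: "v \<bullet> (A *v v) = (\<Sum>l\<in>S. a l * (a l * l) * (p l \<bullet> p l))"
    unfolding Av unfolding v_def by (rule orth_sum[OF finS]) (use porth in blast)
  have Qv: "Q v = W"
  proof -
    have "Q v = (\<Sum>l\<in>S. a l * a l * (p l \<bullet> p l) + t * (a l * (a l * l) * (p l \<bullet> p l)))"
      unfolding Q_def vv vAv by (simp add: sum.distrib sum_distrib_left)
    also have "\<dots> = (\<Sum>l\<in>S. a l * (p l \<bullet> p l))"
    proof (rule sum.cong[OF refl])
      fix l assume "l \<in> S"
      hence "1 + t * l > 0" by (rule pos)
      hence h1: "a l * (1 + t * l) = 1" unfolding a_def by simp
      have "a l * a l * (p l \<bullet> p l) + t * (a l * (a l * l) * (p l \<bullet> p l)) = a l * (p l \<bullet> p l) * (a l * (1 + t * l))"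
        by (simp add: algebra_simps)
      thus "a l * a l * (p l \<bullet> p l) + t * (a l * (a l * l) * (p l \<bullet> p l)) = a l * (p l \<bullet> p l)"
        using \<open>a l * (1 + t * l) = 1\<close> by simp
    qed
    finally show ?thesis using Wa by simp
  qed
  have "W^2 \<le> c * W" using key[of v] ov Qv by simp
  hence Wc: "W \<le> c"
  proof (cases "W > 0")
    case True
    assume "W^2 \<le> c * W"
    hence "W * W \<le> c * W" by (simp add: power2_eq_square)
    thus ?thesis using True by simp
  next
    case False thus ?thesis using cpos by simp
  qed
  show ?thesis
    unfolding A_def[symmetric] L_def[symmetric]
    using xin wg Wc unfolding ln_def c_def n_def \<delta>_def \<mu>_def
    by (intro bexI[of _ "- t"]) auto
qed

end
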